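(* Let $\mathbf{P}$ be a poset that has an interval representation in which every interval has length in $[1,2]$ (i.e. $\mathbf{P}\in C(2)$). Then $\dim(\mathbf{P})\le 4$.
   Context: An interval representation of a poset $(X,P)$ assigns to each $x\in X$ a closed real interval $[l_x,r_x]$ such that $x<y$ in $P$ iff $r_x<l_y$; the length is $r_x-l_x$. $C(\alpha)$ denotes the class of posets having an interval representation with all lengths in $[1,\alpha]$. The dimension $\dim(\mathbf{P})$ is the minimum number of linear extensions of $P$ whose intersection is $P$. *)

theory Defs
  imports Complex_Main
begin

definition strict_poset :: "'a set \<Rightarrow> ('a \<Rightarrow> 'a \<Rightarrow> bool) \<Rightarrow> bool" where
  "strict_poset X lt \<longleftrightarrow>
     (\<forall>x\<in>X. \<not> lt x x) \<and>
     (\<forall>x\<in>X. \<forall>y\<in>X. \<forall>z\<in>X. lt x y \<longrightarrow> lt y z \<longrightarrow> lt x z)"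

definition interval_rep :: "'a set \<Rightarrow> ('a \<Rightarrow> 'a \<Rightarrow> bool) \<Rightarrow> ('a \<Rightarrow> real) \<Rightarrow> ('a \<Rightarrow> real) \<Rightarrow> bool" where
  "interval_rep X lt l r \<longleftrightarrow>
     (\<forall>x\<in>X. l x \<le> r x) \<and> (\<forall>x\<in>X. \<forall>y\<in>X. lt x y \<longleftrightarrow> r x < l y)"

definition in_C :: "real \<Rightarrow> 'a set \<Rightarrow> ('a \<Rightarrow> 'a \<Rightarrow> bool) \<Rightarrow> bool" where
  "in_C \<alpha> X lt \<longleftrightarrow>
     (\<exists>l r. interval_rep X lt l r \<and> (\<forall>x\<in>X. 1 \<le> r x - l x \<and> r x - l x \<le> \<alpha>))"

definition linear_extension :: "'a set \<Rightarrow> ('a \<Rightarrow> 'a \<Rightarrow> bool) \<Rightarrow> ('a \<Rightarrow> 'a \<Rightarrow> bool) \<Rightarrow> bool" where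
  "linear_extension X lt L \<longleftrightarrow>
     (\<forall>x\<in>X. \<not> L x x) \<and>
     (\<forall>x\<in>X. \<forall>y\<in>X. \<forall>z\<in>X. L x y \<longrightarrow> L y z \<longrightarrow> L x z) \<and>
     (\<forall>x\<in>X. \<forall>y\<in>X. x \<noteq> y \<longrightarrow> L x y \<or> L y x) \<and>
     (\<forall>x\<in>X. \<forall>y\<in>X. lt x y \<longrightarrow> L x y)"

definition has_realizer :: "'a set \<Rightarrow> ('a \<Rightarrow> 'a \<Rightarrow> bool) \<Rightarrow> nat \<Rightarrow> bool" where
  "has_realizer X lt k \<longleftrightarrow>
     (\<exists>Ls :: nat \<Rightarrow> 'a \<Rightarrow> 'a \<Rightarrow> bool.
        (\<forall>i<k. linear_extension X lt (Ls i)) \<and>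
        (\<forall>x\<in>X. \<forall>y\<in>X. lt x y \<longleftrightarrow> (\<forall>i<k. Ls i x y)))"

definition poset_dim :: "'a set \<Rightarrow> ('a \<Rightarrow> 'a \<Rightarrow> bool) \<Rightarrow> nat" where
  "poset_dim X lt = (LEAST k. has_realizer X lt k)"

end

theory Submission
  imports Defs "HOL-Library.Product_Lexorder"
begin

definition keyT :: "('a \<Rightarrow> real) \<Rightarrow> ('a \<Rightarrow> real) \<Rightarrow> ('a \<Rightarrow> nat) \<Rightarrow> nat \<Rightarrow> 'a \<Rightarrow> int \<times> real \<times> int \<times> int" where
  "keyT l r f i z =
    (if i = 0 then (\<lfloor>l z\<rfloor>, - l z, 0, int (f z))
     else (let s = int (i - 1); p = (\<lfloor>l z\<rfloor> - s) mod 3 in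
       ((\<lfloor>l z\<rfloor> - s) div 3, (if p = 2 then l z else r z), - p, - int (f z))))"

lemma floor_lt:
  fixes a b :: real
  assumes "a + 1 < b" shows "\<lfloor>a\<rfloor> < \<lfloor>b\<rfloor>"
proof -
  have "real_of_int (\<lfloor>a\<rfloor> + 1) \<le> b" using assms by linarith
  then have "\<lfloor>a\<rfloor> + 1 \<le> \<lfloor>b\<rfloor>" by (simp add: le_floor_iff)
  then show ?thesis by simp
qed

lemma ext_key:
  fixes l r :: "'a \<Rightarrow> real"
  assumes "l x \<le> r x" "l y \<le> r y" "1 \<le> r x - l x" "r x < l y"
  shows "keyT l r f i x < keyT l r f i y"
proof -
  have b: "\<lfloor>l x\<rfloor> < \<lfloor>l y\<rfloor>" using assms by (intro floor_lt) linarith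
  show ?thesis
  proof (cases "i = 0")
    case True then show ?thesis using b by (simp add: keyT_def)
  next
    case False
    define s where "s = int (i - 1)"
    have m: "(\<lfloor>l x\<rfloor> - s) div 3 \<le> (\<lfloor>l y\<rfloor> - s) div 3"
      using b by (intro zdiv_mono1) auto
    have k1: "(if p = 2 then l x else r x) < (if q = 2 then l y else r y)" for p q :: int
      using assms by auto
    show ?thesis using False m k1 unfolding keyT_def s_def[symmetric] Let_def
      by (auto simp: order_le_less)
  qed
qed

lemma incomp_key:
  fixes l r :: "'a \<Rightarrow> real"
  assumes "l x \<le> r x" "l y \<le> r y" "r x - l x \<le> 2"
    and "\<not> r x < l y" "\<not> r y < l x" "f x \<noteq> f y" "l x \<le> l y"
  shows "(\<exists>i<4. keyT l r f i y < keyT l r f i x) \<and> (\<exists>i<4. keyT l r f i x < keyT l r f i y)"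
proof -
  define bx where "bx = \<lfloor>l x\<rfloor>"
  define by' where "by' = \<lfloor>l y\<rfloor>"
  have le: "bx \<le> by'" unfolding bx_def by'_def using assms by (simp add: floor_mono)
  have le2: "by' \<le> bx + 2"
  proof -
    have "l y \<le> l x + 2" using assms by linarith
    moreover have "l x < real_of_int bx + 1" unfolding bx_def by linarith
    ultimately have "real_of_int \<lfloor>l y\<rfloor> < real_of_int (bx + 3)" by linarith
    then have "by' < bx + 3" unfolding by'_def by (simp only: of_int_less_iff)
    then show ?thesis by simp
  qed
  have K: "keyT l r f (Suc n) z = (let s = int n; p = (\<lfloor>l z\<rfloor> - s) mod 3 in
       ((\<lfloor>l z\<rfloor> - s) div 3, (if p = 2 then l z else r z), - p, - int (f z)))" for n z
    by (simp add: keyT_def)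
  show ?thesis
  proof (cases "bx = by'")
    case True
    define n where "n = nat ((bx - 2) mod 3)"
    have n3: "Suc n < 4" unfolding n_def by (simp add: nat_less_iff)
    have pm: "(bx - int n) mod 3 = 2" unfolding n_def by (simp add: mod_diff_eq) presburger
    have pmx: "(\<lfloor>l x\<rfloor> - int n) mod 3 = 2" using pm bx_def by simp
    have pmy: "(\<lfloor>l y\<rfloor> - int n) mod 3 = 2" using pm True by'_def by simp
    show ?thesis
    proof (cases "l x = l y")
      case True
      then have ff: "int (f x) < int (f y) \<or> int (f y) < int (f x)" using assms by auto
      show ?thesis
      proof (cases "int (f x) < int (f y)")
        case c: True
        have a: "keyT l r f 0 x < keyT l r f 0 y" using True c by (simp add: keyT_def)
        have "keyT l r f (Suc n) y < keyT l r f (Suc n) x"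
          using True c pmx pmy by (simp add: K Let_def)
        then show ?thesis using a n3 by (metis zero_less_numeral)
      next
        case c: False
        then have c: "int (f y) < int (f x)" using ff by auto
        have a: "keyT l r f 0 y < keyT l r f 0 x" using True c by (simp add: keyT_def)
        have "keyT l r f (Suc n) x < keyT l r f (Suc n) y"
          using True c pmx pmy by (simp add: K Let_def)
        then show ?thesis using a n3 by (metis zero_less_numeral)
      qed
    next
      case False
      then have lt: "l x < l y" using assms by auto
      have a: "keyT l r f 0 y < keyT l r f 0 x" using lt \<open>bx = by'\<close>
        by (simp add: keyT_def bx_def by'_def)
      have "keyT l r f (Suc n) x < keyT l r f (Suc n) y"
        using lt pm \<open>bx = by'\<close> by (simp add: K Let_def bx_def[symmetric] by'_def[symmetric])
      then show ?thesis using a n3 by (metis zero_less_numeral)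
    qed
  next
    case False
    then have lt: "bx < by'" using le by simp
    have a: "keyT l r f 0 x < keyT l r f 0 y" using lt by (simp add: keyT_def bx_def by'_def)
    have ly: "l y \<le> r x" using assms by simp
    have "\<exists>n. Suc n < 4 \<and> keyT l r f (Suc n) y < keyT l r f (Suc n) x"
    proof (cases "by' = bx + 2")
      case True
      define n where "n = nat (bx mod 3)"
      have n3: "Suc n < 4" unfolding n_def by (simp add: nat_less_iff)
      have e: "(bx - int n) div 3 = (by' - int n) div 3 \<and> (bx - int n) mod 3 = 0 \<and> (by' - int n) mod 3 = 2"
      proof -
        have hn: "int n = bx mod 3" by (simp add: n_def)
        show ?thesis unfolding hn True by presburger
      qed
      have "keyT l r f (Suc n) y < keyT l r f (Suc n) x"
        using e ly by (simp add: K Let_def bx_def[symmetric] by'_def[symmetric])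
      then show ?thesis using n3 by blast
    next
      case False
      then have T: "by' = bx + 1" using lt le2 by simp
      define n where "n = nat ((bx - 1) mod 3)"
      have n3: "Suc n < 4" unfolding n_def by (simp add: nat_less_iff)
      have e: "(bx - int n) div 3 = (by' - int n) div 3 \<and> (bx - int n) mod 3 = 1 \<and> (by' - int n) mod 3 = 2"
      proof -
        have hn: "int n = (bx - 1) mod 3" by (simp add: n_def)
        show ?thesis unfolding hn T by presburger
      qed
      have "keyT l r f (Suc n) y < keyT l r f (Suc n) x"
        using e ly by (simp add: K Let_def bx_def[symmetric] by'_def[symmetric])
      then show ?thesis using n3 by blast
    qed
    then show ?thesis using a by (metis zero_less_numeral)
  qed
qed

theorem theorem7p2:
  fixes X :: "'a set" and lt :: "'a \<Rightarrow> 'a \<Rightarrow> bool"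
  assumes "finite X"
    and "strict_poset X lt"
    and "in_C 2 X lt"
  shows "poset_dim X lt \<le> 4"
proof -
  obtain l r where rep: "interval_rep X lt l r" and len: "\<forall>x\<in>X. 1 \<le> r x - l x \<and> r x - l x \<le> 2"
    using assms(3) unfolding in_C_def by blast
  obtain f :: "'a \<Rightarrow> nat" and n where inj: "inj_on f X"
    using finite_imp_inj_to_nat_seg[OF assms(1)] by blast
  have lr: "\<And>x. x \<in> X \<Longrightarrow> l x \<le> r x" and ltr: "\<And>x y. x \<in> X \<Longrightarrow> y \<in> X \<Longrightarrow> lt x y \<longleftrightarrow> r x < l y"
    using rep unfolding interval_rep_def by auto
  define Ls where "Ls = (\<lambda>i x y. keyT l r f i x < keyT l r f i y)"
  have injK: "keyT l r f i x \<noteq> keyT l r f i y" if "x \<in> X" "y \<in> X" "x \<noteq> y" for i x y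
  proof -
    have "f x \<noteq> f y" using inj that by (meson inj_on_eq_iff)
    then show ?thesis by (auto simp: keyT_def Let_def)
  qed
  have ext: "Ls i x y" if "x \<in> X" "y \<in> X" "lt x y" for i x y
    unfolding Ls_def using that lr len ltr by (intro ext_key) auto
  have inc: "\<exists>i<4. Ls i y x" if "x \<in> X" "y \<in> X" "x \<noteq> y" "\<not> lt x y" "\<not> lt y x" for x y
  proof -
    have fxy: "f x \<noteq> f y" using inj that by (meson inj_on_eq_iff)
    show ?thesis
    proof (cases "l x \<le> l y")
      case True
      show ?thesis using incomp_key[of l x r y f] True fxy that lr len ltr unfolding Ls_def by auto
    next
      case False
      show ?thesis using incomp_key[of l y r x f] False fxy that lr len ltr unfolding Ls_def by auto
    qed
  qed
  have "has_realizer X lt 4"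
    unfolding has_realizer_def
  proof (intro exI[of _ Ls] conjI ballI allI impI)
    fix i assume "i < (4::nat)"
    show "linear_extension X lt (Ls i)"
      unfolding linear_extension_def
    proof (intro conjI ballI impI)
      fix x y assume "x \<in> X" "y \<in> X" "x \<noteq> y"
      then show "Ls i x y \<or> Ls i y x" using injK unfolding Ls_def by (meson neq_iff)
    qed (use ext[unfolded Ls_def] in \<open>auto simp: Ls_def\<close>)
  next
    fix x y assume xy: "x \<in> X" "y \<in> X"
    show "lt x y = (\<forall>i<4. Ls i x y)"
    proof
      assume "lt x y" then show "\<forall>i<4. Ls i x y" using ext xy by blast
    next
      assume A: "\<forall>i<4. Ls i x y"
      show "lt x y"
      proof (rule ccontr)
        assume nl: "\<not> lt x y"
        have "x \<noteq> y" using A[rule_format, of 0] unfolding Ls_def by auto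
        moreover have "\<not> lt y x"
        proof
          assume "lt y x" then have "Ls 0 y x" using ext xy by blast
          then show False using A unfolding Ls_def by (meson less_asym zero_less_numeral)
        qed
        ultimately obtain i where "i < 4" "Ls i y x" using inc xy nl by blast
        then show False using A unfolding Ls_def by (meson less_asym)
      qed
    qed
  qed
  then show ?thesis unfolding poset_dim_def by (rule Least_le)
qed

end
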